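(* For $n\ge1$ let $M_n$ be the number of domino tilings of $K_4\times P_n$. Then $M_n=4M_{n-1}+4M_{n-2}-M_{n-3}$ for $n\ge4$, and for all $n\ge1$, $$M_n=\frac17\Big[\Big(\tfrac{5+\sqrt{21}}2\Big)^{n+1}+\Big(\tfrac{5-\sqrt{21}}2\Big)^{n+1}+2(-1)^n\Big].$$
   Context: $H\times K$ denotes the Cartesian product of graphs. $P_n$ is the path on $n$ vertices and $K_4$ is the complete graph on $4$ vertices. A domino tiling of a finite graph is a perfect matching, and the number of domino tilings is the number of perfect matchings. *)

theory Defs
  imports Complex_Main
begin

type_synonym 'a graph = "'a set \<times> ('a \<Rightarrow> 'a \<Rightarrow> bool)"

definition verts :: "'a graph \<Rightarrow> 'a set" where "verts G = fst G"
definition adj :: "'a graph \<Rightarrow> 'a \<Rightarrow> 'a \<Rightarrow> bool" where "adj G = snd G"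

definition edges :: "'a graph \<Rightarrow> 'a set set" where
  "edges G = {{u, v} | u v. u \<in> verts G \<and> v \<in> verts G \<and> adj G u v}"

definition complete_graph :: "nat \<Rightarrow> nat graph" where
  "complete_graph m = ({0..<m}, \<lambda>u v. u \<noteq> v)"

definition path_graph :: "nat \<Rightarrow> nat graph" where
  "path_graph n = ({0..<n}, \<lambda>u v. v = Suc u \<or> u = Suc v)"

definition cart_prod :: "'a graph \<Rightarrow> 'b graph \<Rightarrow> ('a \<times> 'b) graph" where
  "cart_prod H K = (verts H \<times> verts K,
     \<lambda>(h, k) (h', k'). (h = h' \<and> adj K k k') \<or> (k = k' \<and> adj H h h'))"

definition perfect_matching :: "'a graph \<Rightarrow> 'a set set \<Rightarrow> bool" where
  "perfect_matching G M \<longleftrightarrow> M \<subseteq> edges G \<and> (\<forall>v \<in> verts G. \<exists>!e \<in> M. v \<in> e)"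

definition num_domino_tilings :: "'a graph \<Rightarrow> nat" where
  "num_domino_tilings G = card {M. perfect_matching G M}"

end

theory Submission
  imports Defs
begin


definition pms :: "('a \<Rightarrow> 'a \<Rightarrow> bool) \<Rightarrow> 'a set \<Rightarrow> 'a set set set" where
  "pms R W = {M. M \<subseteq> {{u, v} | u v. u \<in> W \<and> v \<in> W \<and> R u v} \<and> (\<forall>v \<in> W. \<exists>!e \<in> M. v \<in> e)}"

lemma pms_edge: "M \<in> pms R W \<Longrightarrow> e \<in> M \<Longrightarrow> \<exists>a b. e = {a,b} \<and> a \<in> W \<and> b \<in> W \<and> R a b"
  unfolding pms_def by blast

lemma pms_sub: "M \<in> pms R W \<Longrightarrow> e \<in> M \<Longrightarrow> e \<subseteq> W"
  unfolding pms_def by blast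

lemma pms_cover: "M \<in> pms R W \<Longrightarrow> w \<in> W \<Longrightarrow> \<exists>!e\<in>M. w \<in> e"
  unfolding pms_def by simp

lemma pms_finite: assumes "finite W" shows "finite (pms R W)"
proof -
  have "pms R W \<subseteq> Pow (Pow W)" unfolding pms_def by blast
  then show ?thesis using assms by (meson finite_Pow_iff rev_finite_subset)
qed

lemma pms_empty: "pms R {} = {{}}"
  unfolding pms_def by auto

lemma pms_decomp:
  assumes irr: "\<And>x. \<not> R x x" and sym: "\<And>x y. R x y \<Longrightarrow> R y x" and v: "v \<in> W"
  shows "pms R W = (\<Union>u\<in>{u\<in>W. R v u}. insert {v,u} ` pms R (W - {v,u}))"
proof
  show "pms R W \<subseteq> (\<Union>u\<in>{u\<in>W. R v u}. insert {v,u} ` pms R (W - {v,u}))"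
  proof
    fix M assume M: "M \<in> pms R W"
    then obtain e where e: "e \<in> M" "v \<in> e" and eu: "\<And>e'. e' \<in> M \<Longrightarrow> v \<in> e' \<Longrightarrow> e' = e"
      using pms_cover[OF M v] by metis
    obtain a b where ab: "e = {a,b}" "a \<in> W" "b \<in> W" "R a b" using pms_edge[OF M e(1)] by blast
    obtain u where u: "e = {v,u}" "u \<in> W" "R v u" using ab e(2) sym by blast
    have uv: "u \<noteq> v" using u irr by blast
    have uu: "\<And>e'. e' \<in> M \<Longrightarrow> u \<in> e' \<Longrightarrow> e' = e"
      using pms_cover[OF M u(2)] e(1) u(1) by blast
    have "M - {e} \<in> pms R (W - {v,u})"
      unfolding pms_def
    proof (intro CollectI conjI ballI)
      show "M - {e} \<subseteq> {{x, y} |x y. x \<in> W - {v, u} \<and> y \<in> W - {v, u} \<and> R x y}"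
      proof
        fix e' assume e': "e' \<in> M - {e}"
        then obtain a b where ab: "e' = {a,b}" "a \<in> W" "b \<in> W" "R a b" using pms_edge[OF M] by blast
        have "v \<notin> e'" "u \<notin> e'" using eu uu e' by auto
        then have "a \<in> W - {v,u}" "b \<in> W - {v,u}" using ab by auto
        then show "e' \<in> {{x, y} |x y. x \<in> W - {v, u} \<and> y \<in> W - {v, u} \<and> R x y}" using ab(1,4) by blast
      qed
    next
      fix w assume w: "w \<in> W - {v,u}"
      then obtain e' where "e' \<in> M" "w \<in> e'" "\<And>e''. e'' \<in> M \<Longrightarrow> w \<in> e'' \<Longrightarrow> e'' = e'"
        using pms_cover[OF M] w by (metis DiffD1)
      moreover have "w \<notin> e" using w u(1) by auto
      ultimately show "\<exists>!e'\<in>M - {e}. w \<in> e'" by blast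
    qed
    moreover have "M = insert {v,u} (M - {e})" using e(1) u(1) by auto
    ultimately show "M \<in> (\<Union>u\<in>{u\<in>W. R v u}. insert {v,u} ` pms R (W - {v,u}))"
      using u by blast
  qed
next
  show "(\<Union>u\<in>{u\<in>W. R v u}. insert {v,u} ` pms R (W - {v,u})) \<subseteq> pms R W"
  proof
    fix M assume "M \<in> (\<Union>u\<in>{u\<in>W. R v u}. insert {v,u} ` pms R (W - {v,u}))"
    then obtain u M' where u: "u \<in> W" "R v u" and M': "M' \<in> pms R (W - {v,u})" and MM: "M = insert {v,u} M'"
      by blast
    have nv: "\<And>e'. e' \<in> M' \<Longrightarrow> v \<notin> e' \<and> u \<notin> e'" using pms_sub[OF M'] by blast
    show "M \<in> pms R W"
      unfolding pms_def
    proof (intro CollectI conjI ballI)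
      show "M \<subseteq> {{x, y} |x y. x \<in> W \<and> y \<in> W \<and> R x y}"
        using M' u v MM unfolding pms_def by blast
    next
      fix w assume w: "w \<in> W"
      show "\<exists>!e\<in>M. w \<in> e"
      proof (cases "w = v \<or> w = u")
        case True then show ?thesis using nv MM by blast
      next
        case False
        then have "w \<in> W - {v,u}" using w by blast
        then have "\<exists>!e\<in>M'. w \<in> e" using pms_cover[OF M'] by blast
        then show ?thesis using MM False by auto
      qed
    qed
  qed
qed

lemma card_pms_decomp:
  assumes irr: "\<And>x. \<not> R x x" and sym: "\<And>x y. R x y \<Longrightarrow> R y x" and v: "v \<in> W" and fin: "finite W"
  shows "card (pms R W) = (\<Sum>u\<in>{u\<in>W. R v u}. card (pms R (W - {v,u})))"
proof -
  have "card (pms R W) = card (\<Union>u\<in>{u\<in>W. R v u}. insert {v,u} ` pms R (W - {v,u}))"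
    by (subst pms_decomp[where v=v]) (use irr sym v in auto)
  also have "\<dots> = (\<Sum>u\<in>{u\<in>W. R v u}. card (insert {v,u} ` pms R (W - {v,u})))"
  proof (rule card_UN_disjoint)
    show "finite {u \<in> W. R v u}" using fin by simp
    show "\<forall>i\<in>{u \<in> W. R v u}. finite (insert {v, i} ` pms R (W - {v, i}))"
      using fin pms_finite by blast
    show "\<forall>i\<in>{u \<in> W. R v u}. \<forall>j\<in>{u \<in> W. R v u}. i \<noteq> j \<longrightarrow>
       insert {v, i} ` pms R (W - {v, i}) \<inter> insert {v, j} ` pms R (W - {v, j}) = {}"
    proof (intro ballI impI)
      fix i j assume i: "i \<in> {u \<in> W. R v u}" and j: "j \<in> {u \<in> W. R v u}" and ij: "i \<noteq> j"
      show "insert {v, i} ` pms R (W - {v, i}) \<inter> insert {v, j} ` pms R (W - {v, j}) = {}"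
      proof (rule ccontr)
        assume "\<not> ?thesis"
        then obtain A B where A: "A \<in> pms R (W - {v,i})" and B: "B \<in> pms R (W - {v,j})"
          and AB: "insert {v,i} A = insert {v,j} B" by blast
        have "{v,i} \<in> insert {v,j} B" using AB by blast
        moreover have "{v,i} \<noteq> {v,j}" using ij i j irr by (metis doubleton_eq_iff mem_Collect_eq)
        ultimately have "{v,i} \<in> B" by blast
        then show False using pms_sub[OF B] by blast
      qed
    qed
  qed
  also have "\<dots> = (\<Sum>u\<in>{u\<in>W. R v u}. card (pms R (W - {v,u})))"
  proof (rule sum.cong[OF refl])
    fix u assume "u \<in> {u\<in>W. R v u}"
    have "inj_on (insert {v,u}) (pms R (W - {v,u}))"
    proof (rule inj_onI)
      fix A B assume A: "A \<in> pms R (W - {v,u})" and B: "B \<in> pms R (W - {v,u})" and "insert {v,u} A = insert {v,u} B"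
      moreover have "{v,u} \<notin> A" "{v,u} \<notin> B" using pms_sub[OF A] pms_sub[OF B] by blast+
      ultimately show "A = B" by (metis insert_ident)
    qed
    then show "card (insert {v,u} ` pms R (W - {v,u})) = card (pms R (W - {v,u}))"
      by (rule card_image)
  qed
  finally show ?thesis .
qed


definition Rc :: "nat \<times> nat \<Rightarrow> nat \<times> nat \<Rightarrow> bool" where
  "Rc = (\<lambda>(h, k) (h', k'). (h = h' \<and> (k' = Suc k \<or> k = Suc k')) \<or> (k = k' \<and> h \<noteq> h'))"

lemma Rc_irr: "\<not> Rc x x" by (cases x) (auto simp: Rc_def)
lemma Rc_sym: "Rc x y \<Longrightarrow> Rc y x" by (cases x; cases y) (auto simp: Rc_def)

definition Wst :: "nat \<Rightarrow> nat set \<Rightarrow> nat set \<Rightarrow> (nat \<times> nat) set" where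
  "Wst n Y X = {0..<4} \<times> {0..<n} \<union> Y \<times> {n} \<union> X \<times> {Suc n}"

definition c :: "nat \<Rightarrow> nat set \<Rightarrow> nat set \<Rightarrow> nat" where
  "c n Y X = card (pms Rc (Wst n Y X))"

lemma Wst_finite: "finite Y \<Longrightarrow> finite X \<Longrightarrow> finite (Wst n Y X)"
  by (simp add: Wst_def)

lemma nbrs: assumes "v \<in> X"
  shows "{u \<in> Wst n Y X. Rc (v, Suc n) u} = (\<lambda>x. (x, Suc n)) ` (X - {v}) \<union> (if v \<in> Y then {(v,n)} else {})"
proof (rule set_eqI)
  fix u :: "nat \<times> nat"
  obtain a b where u: "u = (a, b)" by (cases u)
  have R: "Rc (v, Suc n) (a, b) \<longleftrightarrow> (a = v \<and> (b = Suc (Suc n) \<or> b = n)) \<or> (b = Suc n \<and> a \<noteq> v)"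
    by (auto simp: Rc_def)
  have W: "(a, b) \<in> Wst n Y X \<longleftrightarrow> (a < 4 \<and> b < n) \<or> (a \<in> Y \<and> b = n) \<or> (a \<in> X \<and> b = Suc n)"
    by (auto simp: Wst_def)
  have I: "(a, b) \<in> (\<lambda>x. (x, Suc n)) ` (X - {v}) \<longleftrightarrow> a \<in> X - {v} \<and> b = Suc n" by auto
  show "u \<in> {u \<in> Wst n Y X. Rc (v, Suc n) u} \<longleftrightarrow> u \<in> (\<lambda>x. (x, Suc n)) ` (X - {v}) \<union> (if v \<in> Y then {(v,n)} else {})"
    unfolding u mem_Collect_eq Un_iff I R W using assms by (cases "v \<in> Y") auto
qed

lemma peel:
  assumes v: "v \<in> X" and fX: "finite X" and fY: "finite Y"
  shows "c n Y X = (\<Sum>x\<in>X - {v}. c n Y (X - {v, x})) + (if v \<in> Y then c n (Y - {v}) (X - {v}) else 0)"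
proof -
  have vin: "(v, Suc n) \<in> Wst n Y X" using v by (simp add: Wst_def)
  have "c n Y X = (\<Sum>u\<in>{u \<in> Wst n Y X. Rc (v, Suc n) u}. card (pms Rc (Wst n Y X - {(v, Suc n), u})))"
    unfolding c_def by (rule card_pms_decomp[OF _ _ vin Wst_finite[OF fY fX]]) (use Rc_irr Rc_sym in blast)+
  also have "\<dots> = (\<Sum>u\<in>(\<lambda>x. (x, Suc n)) ` (X - {v}). card (pms Rc (Wst n Y X - {(v, Suc n), u})))
     + (\<Sum>u\<in>(if v \<in> Y then {(v,n)} else {}). card (pms Rc (Wst n Y X - {(v, Suc n), u})))"
    unfolding nbrs[OF v] by (rule sum.union_disjoint) (use fX in auto)
  also have "(\<Sum>u\<in>(\<lambda>x. (x, Suc n)) ` (X - {v}). card (pms Rc (Wst n Y X - {(v, Suc n), u})))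
     = (\<Sum>x\<in>X - {v}. c n Y (X - {v, x}))"
  proof (subst sum.reindex)
    show "inj_on (\<lambda>x. (x, Suc n)) (X - {v})" by (auto simp: inj_on_def)
    show "(\<Sum>x\<in>X - {v}. ((\<lambda>u. card (pms Rc (Wst n Y X - {(v, Suc n), u}))) \<circ> (\<lambda>x. (x, Suc n))) x) =
      (\<Sum>x\<in>X - {v}. c n Y (X - {v, x}))"
    proof (rule sum.cong[OF refl])
      fix x assume "x \<in> X - {v}"
      have "Wst n Y X - {(v, Suc n), (x, Suc n)} = Wst n Y (X - {v, x})"
        by (auto simp: Wst_def)
      then show "((\<lambda>u. card (pms Rc (Wst n Y X - {(v, Suc n), u}))) \<circ> (\<lambda>x. (x, Suc n))) x = c n Y (X - {v, x})"
        by (simp add: c_def)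
    qed
  qed
  also have "(\<Sum>u\<in>(if v \<in> Y then {(v,n)} else {}). card (pms Rc (Wst n Y X - {(v, Suc n), u})))
     = (if v \<in> Y then c n (Y - {v}) (X - {v}) else 0)"
  proof (cases "v \<in> Y")
    case True
    have "Wst n Y X - {(v, Suc n), (v, n)} = Wst n (Y - {v}) (X - {v})"
      by (auto simp: Wst_def)
    then show ?thesis using True by (simp add: c_def)
  qed simp
  finally show ?thesis .
qed

lemma peelI:
  assumes v: "v \<notin> X" and fX: "finite X" and fY: "finite Y"
  shows "c n Y (insert v X) = (\<Sum>x\<in>X. c n Y (X - {x})) + (if v \<in> Y then c n (Y - {v}) X else 0)"
proof -
  have "c n Y (insert v X) = (\<Sum>x\<in>insert v X - {v}. c n Y (insert v X - {v, x})) + (if v \<in> Y then c n (Y - {v}) (insert v X - {v}) else 0)"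
    by (rule peel) (use fX fY in auto)
  moreover have "insert v X - {v} = X" using v by auto
  moreover have "\<And>x. insert v X - {v, x} = X - {x}" using v by auto
  ultimately show ?thesis by simp
qed

lemma shift: "c (Suc n) Y {} = c n {0..<4} Y"
proof -
  have "Wst (Suc n) Y {} = Wst n {0..<4} Y" by (auto simp: Wst_def less_Suc_eq)
  then show ?thesis by (simp add: c_def)
qed

lemma peel0:
  assumes v: "v \<in> Y" and fY: "finite Y"
  shows "c 0 Y {} = (\<Sum>x\<in>Y - {v}. c 0 (Y - {v, x}) {})"
proof -
  have W: "\<And>Y. Wst 0 Y {} = Y \<times> {0}" by (auto simp: Wst_def)
  have vin: "(v, 0) \<in> Wst 0 Y {}" using v by (simp add: W)
  have nb: "{u \<in> Wst 0 Y {}. Rc (v, 0) u} = (\<lambda>x. (x, 0)) ` (Y - {v})"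
    by (auto simp: W Rc_def)
  have "c 0 Y {} = (\<Sum>u\<in>{u \<in> Wst 0 Y {}. Rc (v, 0) u}. card (pms Rc (Wst 0 Y {} - {(v, 0), u})))"
    unfolding c_def by (rule card_pms_decomp[OF _ _ vin]) (use fY Rc_irr Rc_sym in \<open>blast, blast, simp add: W\<close>)
  also have "\<dots> = (\<Sum>x\<in>Y - {v}. c 0 (Y - {v, x}) {})"
    unfolding nb
  proof (subst sum.reindex)
    show "inj_on (\<lambda>x. (x, 0::nat)) (Y - {v})" by (auto simp: inj_on_def)
    show "(\<Sum>x\<in>Y - {v}. ((\<lambda>u. card (pms Rc (Wst 0 Y {} - {(v, 0), u}))) \<circ> (\<lambda>x. (x, 0))) x) =
      (\<Sum>x\<in>Y - {v}. c 0 (Y - {v, x}) {})"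
    proof (rule sum.cong[OF refl])
      fix x assume "x \<in> Y - {v}"
      have "Wst 0 Y {} - {(v, 0), (x, 0)} = Wst 0 (Y - {v, x}) {}"
        by (auto simp: W)
      then show "((\<lambda>u. card (pms Rc (Wst 0 Y {} - {(v, 0), u}))) \<circ> (\<lambda>x. (x, 0))) x = c 0 (Y - {v, x}) {}"
        by (simp add: c_def)
    qed
  qed
  finally show ?thesis .
qed

lemma c00: "c 0 {} {} = 1"
proof -
  have "Wst 0 {} {} = {}" by (auto simp: Wst_def)
  then show ?thesis by (simp add: c_def pms_empty)
qed

lemma M_c:
  "num_domino_tilings (cart_prod (complete_graph 4) (path_graph (Suc n))) = c n {0..<4} {}"
proof -
  have a: "adj (cart_prod (complete_graph 4) (path_graph (Suc n))) = Rc"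
    by (auto simp: adj_def cart_prod_def complete_graph_def path_graph_def Rc_def fun_eq_iff)
  have v: "verts (cart_prod (complete_graph 4) (path_graph (Suc n))) = Wst n {0..<4} {}"
    by (auto simp: verts_def cart_prod_def complete_graph_def path_graph_def Wst_def less_Suc_eq)
  show ?thesis unfolding num_domino_tilings_def perfect_matching_def c_def pms_def edges_def a v ..
qed


lemma peel0I:
  assumes v: "v \<notin> Y" and fY: "finite Y"
  shows "c 0 (insert v Y) {} = (\<Sum>x\<in>Y. c 0 (Y - {x}) {})"
proof -
  have "c 0 (insert v Y) {} = (\<Sum>x\<in>insert v Y - {v}. c 0 (insert v Y - {v, x}) {})"
    by (rule peel0) (use fY in auto)
  moreover have "insert v Y - {v} = Y" using v by auto
  moreover have "\<And>x. insert v Y - {v, x} = Y - {x}" using v by auto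
  ultimately show ?thesis by simp
qed

lemma full: "{0..<4} = {0,1,2,3::nat}" by auto

definition m where "m n = c n {0,1,2,3} {}"
definition s where "s n = c n {2,3} {} + c n {1,3} {} + c n {1,2} {} + c n {0,3} {} + c n {0,2} {} + c n {0,1} {}"
definition t where "t n = c n {} {}"

lemma E1: "c n {0,1,2,3} {0,1,2,3} = 3 * c n {0,1,2,3} {} + c n {2,3} {} + c n {1,3} {} + c n {1,2} {}
   + c n {0,3} {} + c n {0,2} {} + c n {0,1} {} + c n {} {}"
  by (simp add: peelI insert_Diff_if del: One_nat_def)

lemma E2:
  "c n {0,1,2,3} {2,3} = c n {0,1,2,3} {} + c n {0,1} {}"
  "c n {0,1,2,3} {1,3} = c n {0,1,2,3} {} + c n {0,2} {}"
  "c n {0,1,2,3} {1,2} = c n {0,1,2,3} {} + c n {0,3} {}"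
  "c n {0,1,2,3} {0,3} = c n {0,1,2,3} {} + c n {1,2} {}"
  "c n {0,1,2,3} {0,2} = c n {0,1,2,3} {} + c n {1,3} {}"
  "c n {0,1,2,3} {0,1} = c n {0,1,2,3} {} + c n {2,3} {}"
  by (simp_all add: peelI insert_Diff_if insert_commute del: One_nat_def)

lemma m_Suc: "m (Suc n) = 3 * m n + s n + t n"
  unfolding m_def s_def t_def shift full[symmetric] by (simp add: full E1 del: One_nat_def)

lemma s_Suc: "s (Suc n) = 6 * m n + s n"
  unfolding m_def s_def shift by (simp add: full E2 del: One_nat_def)

lemma t_Suc: "t (Suc n) = m n"
  unfolding m_def t_def shift by (simp add: full)

lemma base: "m 0 = 3" "s 0 = 6" "t 0 = 1"
  unfolding m_def s_def t_def by (simp_all add: peel0I insert_Diff_if c00)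


lemma m_rec: "int (m (k+3)) = 4 * int (m (k+2)) + 4 * int (m (k+1)) - int (m k)"
proof -
  have e: "k+3 = Suc (k+2)" "k+2 = Suc (k+1)" "k+1 = Suc k" by simp_all
  have "m (k+3) = 3 * m (k+2) + s (k+2) + t (k+2)" unfolding e(1) by (rule m_Suc)
  moreover have "m (k+2) = 3 * m (k+1) + s (k+1) + t (k+1)" unfolding e(2) by (rule m_Suc)
  moreover have "s (k+2) = 6 * m (k+1) + s (k+1)" unfolding e(2) by (rule s_Suc)
  moreover have "t (k+2) = m (k+1)" unfolding e(2) by (rule t_Suc)
  moreover have "t (k+1) = m k" unfolding e(3) by (rule t_Suc)
  ultimately show ?thesis by linarith
qed

lemma m_vals: "m 1 = 16" "m 2 = 75"
proof -
  show "m 1 = 16" using m_Suc[of 0] base by simp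
  have "s 1 = 24" "t 1 = 3" using s_Suc[of 0] t_Suc[of 0] base by simp_all
  then show "m 2 = 75" using m_Suc[of 1] \<open>m 1 = 16\<close> by (simp add: numeral_2_eq_2)
qed

lemma root_eqs:
  fixes x :: real
  assumes "x = (5 + sqrt 21)/2 \<or> x = (5 - sqrt 21)/2"
  shows "x^2 = 5*x - 1"
proof -
  have "2*x - 5 = sqrt 21 \<or> 2*x - 5 = - sqrt 21" using assms by auto
  then have sq: "(2*x - 5)^2 = 21" by auto
  have "(2*x - 5)^2 = 4*x^2 - 20*x + 25" by (simp add: power2_eq_square algebra_simps)
  then show ?thesis using sq by linarith
qed

lemma cube: fixes x :: real assumes a: "x^2 = 5*x - 1" shows "x^3 = 24*x - 5"
proof -
  have a': "x*x = 5*x - 1" using a by (simp add: power2_eq_square)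
  have "x^3 = x * (x*x)" by (simp add: power3_eq_cube)
  also have "\<dots> = x * (5*x - 1)" using a' by simp
  also have "\<dots> = 5*(x*x) - x" by (simp add: algebra_simps)
  also have "\<dots> = 24*x - 5" using a' by simp
  finally show ?thesis .
qed

lemma pow_rec: fixes x :: real assumes a: "x^2 = 5*x - 1"
  shows "x^(j+3) = 4*x^(j+2) + 4*x^(j+1) - x^j"
proof -
  have p2: "x^(j+2) = x^j * x^2" by (rule power_add)
  have p3: "x^(j+3) = x^j * x^3" by (rule power_add)
  have p1: "x^(j+1) = x^j * x" by simp
  show ?thesis unfolding p1 p2 p3 cube[OF a] a by (simp add: algebra_simps)
qed

definition F :: "nat \<Rightarrow> real" where
  "F k = (1/7) * (((5 + sqrt 21) / 2) ^ (k + 2) + ((5 - sqrt 21) / 2) ^ (k + 2) + 2 * (-1) ^ (k+1))"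

lemma F_rec: "F (k+3) = 4 * F (k+2) + 4 * F (k+1) - F k"
proof -
  define a :: real where "a = (5 + sqrt 21)/2"
  define b :: real where "b = (5 - sqrt 21)/2"
  have a2: "a^2 = 5*a - 1" and b2: "b^2 = 5*b - 1" using root_eqs a_def b_def by auto
  have pa: "a^(k+2+3) = 4*a^(k+2+2) + 4*a^(k+2+1) - a^(k+2)" by (rule pow_rec[OF a2])
  have pb: "b^(k+2+3) = 4*b^(k+2+2) + 4*b^(k+2+1) - b^(k+2)" by (rule pow_rec[OF b2])
  have F': "\<And>j. F j = (1/7) * (a^(j+2) + b^(j+2) + 2 * (-1)^(j+1))" unfolding F_def a_def b_def by simp
  have "(-1::real)^(k+3+1) = 4 * (-1)^(k+2+1) + 4 * (-1)^(k+1+1) - (-1)^(k+1)"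
    by (simp add: power_add)
  moreover have "k+3+2 = k+2+3" "k+2+2 = k+2+2" "k+1+2 = k+2+1" by simp_all
  ultimately show ?thesis unfolding F' using pa pb
    by (simp add: algebra_simps)
qed

lemma F_vals: "F 0 = 3" "F 1 = 16" "F 2 = 75"
proof -
  define a :: real where "a = (5 + sqrt 21)/2"
  define b :: real where "b = (5 - sqrt 21)/2"
  have a2: "a^2 = 5*a - 1" and b2: "b^2 = 5*b - 1" using root_eqs a_def b_def by auto
  have ab: "a + b = 5" unfolding a_def b_def by (simp add: field_simps)
  have F': "\<And>j. F j = (1/7) * (a^(j+2) + b^(j+2) + 2 * (-1)^(j+1))" unfolding F_def a_def b_def by simp
  have a4: "a^4 = 115*a - 24"
  proof -
    have "a^4 = a * a^3" by (simp add: eval_nat_numeral)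
    also have "\<dots> = 24 * (a*a) - 5*a" unfolding cube[OF a2] by (simp add: algebra_simps)
    also have "\<dots> = 115*a - 24" using a2 by (simp add: power2_eq_square)
    finally show ?thesis .
  qed
  have b4: "b^4 = 115*b - 24"
  proof -
    have "b^4 = b * b^3" by (simp add: eval_nat_numeral)
    also have "\<dots> = 24 * (b*b) - 5*b" unfolding cube[OF b2] by (simp add: algebra_simps)
    also have "\<dots> = 115*b - 24" using b2 by (simp add: power2_eq_square)
    finally show ?thesis .
  qed
  have s2: "a^2 + b^2 = 23" using a2 b2 ab by linarith
  have s3: "a^3 + b^3 = 110" using cube[OF a2] cube[OF b2] ab by linarith
  have s4: "a^4 + b^4 = 527" using a4 b4 ab by linarith
  have "F 0 = (1/7) * (a^2 + b^2 - 2)" unfolding F' by (simp add: eval_nat_numeral)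
  then show "F 0 = 3" using s2 by simp
  have "F 1 = (1/7) * (a^3 + b^3 + 2)" unfolding F' by (simp add: eval_nat_numeral)
  then show "F 1 = 16" using s3 by simp
  have "F 2 = (1/7) * (a^4 + b^4 - 2)" unfolding F' by (simp add: eval_nat_numeral)
  then show "F 2 = 75" using s4 by simp
qed

lemma m_F: "real (m k) = F k"
proof (induction k rule: less_induct)
  case (less k)
  show ?case
  proof (cases "k < 3")
    case True
    then have "k = 0 \<or> k = 1 \<or> k = 2" by auto
    then show ?thesis using base m_vals F_vals by auto
  next
    case False
    then obtain j where j: "k = j + 3" by (metis add.commute le_Suc_ex not_less)
    have "real_of_int (int (m (j+3))) = real_of_int (4 * int (m (j+2)) + 4 * int (m (j+1)) - int (m j))"
      using m_rec by presburger
    then have "real (m (j+3)) = 4 * real (m (j+2)) + 4 * real (m (j+1)) - real (m j)" by simp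
    then show ?thesis using less.IH[of "j+2"] less.IH[of "j+1"] less.IH[of j] j F_rec[of j] by simp
  qed
qed

theorem theorem10:
  fixes M :: "nat \<Rightarrow> nat"
  assumes "\<And>n. M n = num_domino_tilings (cart_prod (complete_graph 4) (path_graph n))"
  shows "(\<forall>n\<ge>4. int (M n) = 4 * int (M (n - 1)) + 4 * int (M (n - 2)) - int (M (n - 3)))
    \<and> (\<forall>n\<ge>1. real (M n) = (1/7) * (((5 + sqrt 21) / 2) ^ (n + 1) + ((5 - sqrt 21) / 2) ^ (n + 1)
                                  + 2 * (-1) ^ n))"
proof -
  have Mm: "\<And>k. M (Suc k) = m k" using assms by (simp add: M_c m_def full)
  show ?thesis
  proof (intro conjI allI impI)
    fix n :: nat assume "n \<ge> 4"
    then obtain k where k: "n = k + 4" by (metis add.commute le_Suc_ex)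
    have "M n = m (k+3)" "M (n-1) = m (k+2)" "M (n-2) = m (k+1)" "M (n-3) = m k"
      using Mm k by (simp_all add: numeral_eq_Suc)
    then show "int (M n) = 4 * int (M (n - 1)) + 4 * int (M (n - 2)) - int (M (n - 3))"
      using m_rec[of k] by simp
  next
    fix n :: nat assume "n \<ge> 1"
    then obtain k where k: "n = Suc k" using not0_implies_Suc by fastforce
    show "real (M n) = (1/7) * (((5 + sqrt 21) / 2) ^ (n + 1) + ((5 - sqrt 21) / 2) ^ (n + 1)
                                  + 2 * (-1) ^ n)"
      using m_F[of k] Mm[of k] k by (simp add: F_def)
  qed
qed

end
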